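(* Let $F$ be a finite field and $G$ a finite abelian group. Let $0<r<1$, for each $n$ put $k=[rn]$ (the integer nearest to $rn$), and let $A$ be chosen uniformly at random from $(FG)^{k\times n}$. Then $\lim_{n\to\infty}\Pr(A \text{ is full-rank})=1$, equivalently $\lim_{n\to\infty}\Pr(A\text{ is not full-rank})=0$, and both limits converge exponentially.
   Context: $FG$ is the group algebra of $G$ over $F$. A matrix $A\in(FG)^{k\times n}$ is full-rank if its $FG$-rank equals $k$; equivalently, the $F$-dimension of $\{\mathbf{b}A\mid\mathbf{b}\in(FG)^k\}\subseteq(FG)^n$ equals $k|G|$. *)

theory Defs
  imports Complex_Main "HOL-Library.Function_Algebras"
begin

text \<open>Group algebra FG of a finite abelian group G (written additively, type 'g)
  over a field F (type 'f): elements are functions 'g => 'f, multiplication is convolution.\<close>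

definition gconv :: "('g::{ab_group_add,finite} \<Rightarrow> 'f::field) \<Rightarrow> ('g \<Rightarrow> 'f) \<Rightarrow> 'g \<Rightarrow> 'f" where
  "gconv a b = (\<lambda>x. \<Sum>h\<in>UNIV. a h * b (x - h))"

text \<open>k x n matrices over FG: entries indexed by i < k, j < n, zero elsewhere.\<close>
definition gmats :: "nat \<Rightarrow> nat \<Rightarrow> (nat \<Rightarrow> nat \<Rightarrow> 'g::{ab_group_add,finite} \<Rightarrow> 'f::{field,finite}) set" where
  "gmats k n = {A. \<forall>i j. (k \<le> i \<or> n \<le> j) \<longrightarrow> A i j = 0}"

definition row_space :: "nat \<Rightarrow> nat \<Rightarrow> (nat \<Rightarrow> nat \<Rightarrow> 'g::{ab_group_add,finite} \<Rightarrow> 'f::field)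
    \<Rightarrow> (nat \<Rightarrow> 'g \<Rightarrow> 'f) set" where
  "row_space k n A = {(\<lambda>j. if j < n then (\<Sum>i<k. gconv (b i) (A i j)) else 0) | b. True}"

definition fscale :: "'f::field \<Rightarrow> (nat \<Rightarrow> 'g \<Rightarrow> 'f) \<Rightarrow> (nat \<Rightarrow> 'g \<Rightarrow> 'f)" where
  "fscale c v = (\<lambda>j g. c * v j g)"

definition full_rank :: "nat \<Rightarrow> nat \<Rightarrow> (nat \<Rightarrow> nat \<Rightarrow> 'g::{ab_group_add,finite} \<Rightarrow> 'f::field) \<Rightarrow> bool" where
  "full_rank k n A \<longleftrightarrow>
     vector_space.dim (fscale :: 'f \<Rightarrow> _) (row_space k n A) = k * card (UNIV :: 'g set)"

definition prob_full_rank :: "'f::{field,finite} itself \<Rightarrow> 'g::{ab_group_add,finite} itself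
    \<Rightarrow> nat \<Rightarrow> nat \<Rightarrow> real" where
  "prob_full_rank TF TG k n =
     real (card {A \<in> (gmats k n :: (nat \<Rightarrow> nat \<Rightarrow> 'g \<Rightarrow> 'f) set). full_rank k n A})
     / real (card (gmats k n :: (nat \<Rightarrow> nat \<Rightarrow> 'g \<Rightarrow> 'f) set))"

end

theory Submission
  imports Defs "HOL-Library.FuncSet"
begin


lemma sum_app: "(sum f A) x = (\<Sum>a\<in>A. f a x)"
  by (induction A rule: infinite_finite_induct) auto

lemma vs_fscale: "vector_space (fscale :: 'f::field \<Rightarrow> (nat \<Rightarrow> 'g \<Rightarrow> 'f) \<Rightarrow> _)"
  by unfold_locales (auto simp: fscale_def fun_eq_iff algebra_simps)

lemma gconv_add_left: "gconv (x + y) a = gconv x a + gconv y a"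
  by (auto simp: gconv_def fun_eq_iff algebra_simps sum.distrib)
lemma gconv_add_right: "gconv x (a + b) = gconv x a + gconv x b"
  by (auto simp: gconv_def fun_eq_iff algebra_simps sum.distrib)
lemma gconv_scale_left: "gconv (\<lambda>g. c * x g) a = (\<lambda>g. c * gconv x a g)"
  by (auto simp: gconv_def fun_eq_iff algebra_simps sum_distrib_left)
lemma gconv_zero_left: "gconv 0 a = 0"
  by (auto simp: gconv_def fun_eq_iff)
lemma gconv_zero_right: "gconv x 0 = 0"
  by (auto simp: gconv_def fun_eq_iff)
lemma gconv_delta: "gconv x (\<lambda>g. if g = 0 then 1 else 0) = x"
proof
  fix y
  have "gconv x (\<lambda>g. if g = 0 then 1 else 0) y = (\<Sum>h\<in>UNIV. if h = y then x h else 0)"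
    unfolding gconv_def by (intro sum.cong) auto
  also have "\<dots> = x y" by simp
  finally show "gconv x (\<lambda>g. if g = 0 then 1 else 0) y = x y" .
qed

definition Lmap :: "nat \<Rightarrow> nat \<Rightarrow> (nat \<Rightarrow> nat \<Rightarrow> 'g::{ab_group_add,finite} \<Rightarrow> 'f::field)
   \<Rightarrow> (nat \<Rightarrow> 'g \<Rightarrow> 'f) \<Rightarrow> (nat \<Rightarrow> 'g \<Rightarrow> 'f)" where
  "Lmap k n A b = (\<lambda>j. if j < n then (\<Sum>i<k. gconv (b i) (A i j)) else 0)"

lemma row_space_Lmap: "row_space k n A = range (Lmap k n A)"
  unfolding row_space_def Lmap_def by auto

lemma Lmap_add_b: "Lmap k n A (b + b') = Lmap k n A b + Lmap k n A b'"
  by (auto simp: Lmap_def fun_eq_iff gconv_add_left sum.distrib)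
lemma Lmap_scale_b: "Lmap k n A (fscale c b) = fscale c (Lmap k n A b)"
  by (auto simp: Lmap_def fscale_def fun_eq_iff gconv_scale_left sum_app sum_distrib_left)
lemma Lmap_add_A: "Lmap k n (A + A') b = Lmap k n A b + Lmap k n A' b"
  by (auto simp: Lmap_def fun_eq_iff gconv_add_right sum.distrib)

lemma linear_Lmap: "Vector_Spaces.linear fscale fscale (Lmap k n A)"
  using vs_fscale by (auto simp: Vector_Spaces.linear_iff Lmap_add_b Lmap_scale_b)



definition Bk :: "nat \<Rightarrow> (nat \<Rightarrow> 'g \<Rightarrow> 'f::zero) set" where
  "Bk k = {b. \<forall>i\<ge>k. b i = 0}"

definition delta :: "nat \<Rightarrow> 'g \<Rightarrow> nat \<Rightarrow> 'g \<Rightarrow> 'f::{zero,one}" where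
  "delta i g = (\<lambda>i' g'. if i' = i \<and> g' = g then 1 else 0)"

lemma delta_inj: "inj (\<lambda>(i,g). (delta i g :: nat \<Rightarrow> 'g \<Rightarrow> 'f::zero_neq_one))"
  by (auto simp: inj_def delta_def fun_eq_iff split: if_splits)

lemma not_full_rank_kernel:
  fixes A :: "nat \<Rightarrow> nat \<Rightarrow> 'g::{ab_group_add,finite} \<Rightarrow> 'f::field"
  assumes "\<not> full_rank k n A"
  shows "\<exists>b\<in>Bk k. b \<noteq> 0 \<and> Lmap k n A b = 0"
proof (rule ccontr)
  assume nb: "\<not> ?thesis"
  interpret V: vector_space "fscale :: 'f \<Rightarrow> (nat \<Rightarrow> 'g \<Rightarrow> 'f) \<Rightarrow> _" by (rule vs_fscale)
  interpret VP: vector_space_pair "fscale :: 'f \<Rightarrow> (nat \<Rightarrow> 'g \<Rightarrow> 'f) \<Rightarrow> _" fscale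
    by (intro vector_space_pair.intro vs_fscale)
  define E :: "(nat \<Rightarrow> 'g \<Rightarrow> 'f) set" where "E = (\<lambda>(i,g). delta i g) ` ({..<k} \<times> UNIV)"
  have finE: "finite E" unfolding E_def by auto
  have cardE: "card E = k * card (UNIV :: 'g set)"
    unfolding E_def by (subst card_image) (auto intro: inj_on_subset[OF delta_inj] simp: card_cartesian_product)
  have EB: "E \<subseteq> Bk k" unfolding E_def Bk_def delta_def by auto
  have subB: "V.subspace (Bk k)"
    unfolding V.subspace_def Bk_def fscale_def by (auto simp: fun_eq_iff)
  have Bspan: "Bk k \<subseteq> V.span E"
  proof
    fix x :: "nat \<Rightarrow> 'g \<Rightarrow> 'f" assume x: "x \<in> Bk k"
    have "x = (\<Sum>p\<in>{..<k} \<times> UNIV. fscale (x (fst p) (snd p)) (delta (fst p) (snd p)))"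
    proof (intro ext)
      fix i g
      have "(\<Sum>p\<in>{..<k} \<times> UNIV. fscale (x (fst p) (snd p)) (delta (fst p) (snd p))) i g
          = (\<Sum>p\<in>{..<k} \<times> UNIV. if p = (i,g) then x i g else 0)"
        unfolding sum_app by (intro sum.cong) (auto simp: fscale_def delta_def)
      also have "\<dots> = x i g" using x by (auto simp: Bk_def)
      finally show "x i g = (\<Sum>p\<in>{..<k} \<times> UNIV. fscale (x (fst p) (snd p)) (delta (fst p) (snd p))) i g"
        by simp
    qed
    also have "\<dots> \<in> V.span E"
      by (intro V.span_sum V.span_scale V.span_base) (auto simp: E_def)
    finally show "x \<in> V.span E" .
  qed
  have spanE: "V.span E = Bk k"
    using V.span_subspace[OF EB Bspan subB] .
  have indE: "V.independent E"
  proof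
    assume "V.dependent E"
    then obtain u where u: "\<exists>v\<in>E. u v \<noteq> 0" "(\<Sum>v\<in>E. fscale (u v) v) = 0"
      using V.dependent_finite[OF finE] by auto
    then obtain i g where ig: "i < k" "u (delta i g) \<noteq> 0" unfolding E_def by auto
    have "0 = (\<Sum>v\<in>E. fscale (u v) v) i g" using u by simp
    also have "\<dots> = (\<Sum>p\<in>{..<k} \<times> UNIV. fscale (u (delta (fst p) (snd p))) (delta (fst p) (snd p)) i g)"
      unfolding E_def sum_app
      by (subst sum.reindex) (auto intro: inj_on_subset[OF delta_inj] simp: case_prod_beta)
    also have "\<dots> = (\<Sum>p\<in>{..<k} \<times> UNIV. if p = (i,g) then u (delta i g) else 0)"
      by (intro sum.cong) (auto simp: fscale_def delta_def)
    also have "\<dots> = u (delta i g)" using ig by auto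
    finally show False using ig by simp
  qed
  have lin: "Vector_Spaces.linear fscale fscale (Lmap k n A)" by (rule linear_Lmap)
  have inj: "inj_on (Lmap k n A) (V.span E)"
    unfolding spanE using VP.linear_inj_on_iff_eq_0[OF lin subB] nb by auto
  have indL: "V.independent (Lmap k n A ` E)"
    using VP.linear_independent_injective_image[OF lin indE inj] .
  have rs: "row_space k n A = V.span (Lmap k n A ` E)"
  proof -
    have "range (Lmap k n A) = Lmap k n A ` Bk k"
    proof
      show "range (Lmap k n A) \<subseteq> Lmap k n A ` Bk k"
      proof
        fix y assume "y \<in> range (Lmap k n A)"
        then obtain b where y: "y = Lmap k n A b" by auto
        define b' where "b' = (\<lambda>i. if i < k then b i else 0)"
        have "Lmap k n A b' = y" unfolding y Lmap_def b'_def by (auto intro!: ext sum.cong)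
        moreover have "b' \<in> Bk k" by (auto simp: b'_def Bk_def)
        ultimately show "y \<in> Lmap k n A ` Bk k" by auto
      qed
    qed auto
    then show ?thesis
      unfolding row_space_Lmap VP.linear_span_image[OF lin] spanE by simp
  qed
  have "V.dim (row_space k n A) = k * card (UNIV :: 'g set)"
    unfolding rs V.dim_span_eq_card_independent[OF indL]
    using cardE inj V.span_superset by (subst card_image) (auto intro: inj_on_subset)
  then show False using assms unfolding full_rank_def by simp
qed



lemma hom_card:
  fixes f :: "'a::ab_group_add \<Rightarrow> 'b::ab_group_add"
  assumes fin: "finite S" and z: "0 \<in> S" and ad: "\<And>x y. x\<in>S \<Longrightarrow> y\<in>S \<Longrightarrow> x+y \<in> S"
    and ng: "\<And>x. x\<in>S \<Longrightarrow> -x \<in> S" and hom: "\<And>x y. x\<in>S \<Longrightarrow> y\<in>S \<Longrightarrow> f(x+y) = f x + f y"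
  shows "card S = card {x\<in>S. f x = 0} * card (f ` S)"
proof -
  have f0: "f 0 = 0" using hom[OF z z] by simp
  have fneg: "f (-x) = - f x" if "x \<in> S" for x
    using hom[OF that ng[OF that]] f0 by (simp add: eq_neg_iff_add_eq_0 add.commute)
  have fib: "card {x\<in>S. f x = y} = card {x\<in>S. f x = 0}" if yS: "y \<in> f ` S" for y
  proof -
    obtain x0 where x0: "x0 \<in> S" "f x0 = y" using yS by auto
    have "bij_betw (\<lambda>z. z + x0) {x\<in>S. f x = 0} {x\<in>S. f x = y}"
    proof (rule bij_betw_imageI)
      show "inj_on (\<lambda>z. z + x0) {x\<in>S. f x = 0}" by (auto simp: inj_on_def)
      show "(\<lambda>z. z + x0) ` {x\<in>S. f x = 0} = {x\<in>S. f x = y}"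
      proof
        show "(\<lambda>z. z + x0) ` {x\<in>S. f x = 0} \<subseteq> {x\<in>S. f x = y}"
          using x0 ad hom by auto
        show "{x\<in>S. f x = y} \<subseteq> (\<lambda>z. z + x0) ` {x\<in>S. f x = 0}"
        proof
          fix w assume w: "w \<in> {x\<in>S. f x = y}"
          have "w + - x0 \<in> S" using ad[of w "-x0"] ng[of x0] w x0 by simp
          moreover have "f (w + - x0) = 0" using w x0 hom[of w "-x0"] ng fneg by auto
          moreover have "w = (w + - x0) + x0" by simp
          ultimately show "w \<in> (\<lambda>z. z + x0) ` {x\<in>S. f x = 0}" by blast
        qed
      qed
    qed
    then show ?thesis by (simp add: bij_betw_same_card)
  qed
  have "S = (\<Union>y\<in>f ` S. {x\<in>S. f x = y})" by auto
  then have "card S = card (\<Union>y\<in>f ` S. {x\<in>S. f x = y})" by simp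
  also have "\<dots> = (\<Sum>y\<in>f ` S. card {x\<in>S. f x = y})"
    using fin by (intro card_UN_disjoint) auto
  also have "\<dots> = (\<Sum>y\<in>f ` S. card {x\<in>S. f x = 0})" by (intro sum.cong) (auto simp: fib)
  finally show ?thesis by simp
qed

lemma finite_gmats: "finite (gmats k n :: (nat \<Rightarrow> nat \<Rightarrow> 'g::{ab_group_add,finite} \<Rightarrow> 'f::{field,finite}) set)"
proof -
  let ?r = "\<lambda>A :: nat \<Rightarrow> nat \<Rightarrow> 'g \<Rightarrow> 'f. (\<lambda>p\<in>{..<k}\<times>{..<n}. A (fst p) (snd p))"
  have i: "inj_on ?r (gmats k n)"
  proof
    fix A B assume A: "A \<in> gmats k n" and B: "B \<in> gmats k n" and e: "?r A = ?r B"
    have "A i j = B i j" for i j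
      proof (cases "i < k \<and> j < n")
        case True then show ?thesis using fun_cong[OF e, of "(i,j)"] by auto
      next
        case False then show ?thesis using A B by (auto simp: gmats_def)
      qed
    then show "A = B" by (intro ext) metis
  qed
  have s: "?r ` gmats k n \<subseteq> PiE ({..<k}\<times>{..<n}) (\<lambda>_. UNIV)" by auto
  have f: "finite (PiE ({..<k}\<times>{..<n}) (\<lambda>_. UNIV :: ('g \<Rightarrow> 'f) set))" by (intro finite_PiE) auto
  show ?thesis by (rule inj_on_finite[OF i s f])
qed

lemma card_Bk_le:
  fixes W :: "('g \<Rightarrow> 'f::zero) set"
  assumes "finite W"
  shows "finite {b :: nat \<Rightarrow> 'g \<Rightarrow> 'f. b \<in> Bk k \<and> (\<forall>i<k. b i \<in> W)} \<and>
         card {b :: nat \<Rightarrow> 'g \<Rightarrow> 'f. b \<in> Bk k \<and> (\<forall>i<k. b i \<in> W)} \<le> card W ^ k"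
proof -
  let ?S = "{b :: nat \<Rightarrow> 'g \<Rightarrow> 'f. b \<in> Bk k \<and> (\<forall>i<k. b i \<in> W)}"
  have inj: "inj_on (\<lambda>b. restrict b {..<k}) ?S"
  proof
    fix a b assume a: "a \<in> ?S" and b: "b \<in> ?S" and e: "restrict a {..<k} = restrict b {..<k}"
    show "a = b"
    proof
      fix i show "a i = b i"
        using fun_cong[OF e, of i] a b by (cases "i < k") (auto simp: Bk_def)
    qed
  qed
  have sub: "(\<lambda>b. restrict b {..<k}) ` ?S \<subseteq> PiE {..<k} (\<lambda>_. W)" by auto
  have fP: "finite (PiE {..<k} (\<lambda>_. W))" using assms by (intro finite_PiE) auto
  have "card ?S \<le> card (PiE {..<k} (\<lambda>_. W))"
    by (rule card_inj_on_le[OF inj sub fP])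
  also have "\<dots> = card W ^ k" by (simp add: card_PiE)
  finally show ?thesis using inj_on_finite[OF inj sub fP] by simp
qed

definition Wb :: "nat \<Rightarrow> (nat \<Rightarrow> 'g::{ab_group_add,finite} \<Rightarrow> 'f::field) \<Rightarrow> ('g \<Rightarrow> 'f) set" where
  "Wb k b = {\<Sum>i<k. gconv (b i) (a i) | a. True}"

lemma Wb_props:
  fixes b :: "nat \<Rightarrow> 'g::{ab_group_add,finite} \<Rightarrow> 'f::{field,finite}"
  assumes "b \<in> Bk k" "b \<noteq> 0"
  shows "card (Wb k b) \<ge> 2" "\<forall>i<k. b i \<in> Wb k b"
proof -
  have mem: "b i \<in> Wb k b" if "i < k" for i
  proof -
    define a :: "nat \<Rightarrow> 'g \<Rightarrow> 'f" where "a = (\<lambda>i'. if i' = i then (\<lambda>g. if g = 0 then 1 else 0) else 0)"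
    have "(\<Sum>i'<k. gconv (b i') (a i')) = (\<Sum>i'<k. if i' = i then b i else 0)"
      by (intro sum.cong) (auto simp: a_def gconv_delta gconv_zero_right)
    also have "\<dots> = b i" using that by simp
    finally show ?thesis unfolding Wb_def by (metis (mono_tags, lifting) mem_Collect_eq)
  qed
  then show "\<forall>i<k. b i \<in> Wb k b" by auto
  have z: "0 \<in> Wb k b" unfolding Wb_def
    by (rule CollectI, rule exI[of _ "\<lambda>_. 0"]) (simp add: gconv_zero_right)
  obtain i where i: "b i \<noteq> 0" using assms(2) by (auto simp: fun_eq_iff)
  then have "i < k" using assms(1) by (auto simp: Bk_def not_le[symmetric])
  then have "{0, b i} \<subseteq> Wb k b" using mem z by auto
  then have "card {0, b i} \<le> card (Wb k b)" by (intro card_mono) auto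
  then show "card (Wb k b) \<ge> 2" using i by simp
qed

lemma ker_bound:
  fixes b :: "nat \<Rightarrow> 'g::{ab_group_add,finite} \<Rightarrow> 'f::{field,finite}"
  shows "card {A \<in> gmats k n. Lmap k n A b = 0} * card (Wb k b) ^ n \<le> card (gmats k n :: (nat \<Rightarrow> nat \<Rightarrow> 'g \<Rightarrow> 'f) set)"
proof -
  let ?G = "gmats k n :: (nat \<Rightarrow> nat \<Rightarrow> 'g \<Rightarrow> 'f) set"
  let ?f = "\<lambda>A. Lmap k n A b"
  have cG: "card ?G = card {A \<in> ?G. ?f A = 0} * card (?f ` ?G)"
    by (rule hom_card[OF finite_gmats]) (auto simp: gmats_def Lmap_add_A)
  define ext :: "(nat \<Rightarrow> 'g \<Rightarrow> 'f) \<Rightarrow> (nat \<Rightarrow> 'g \<Rightarrow> 'f)" where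
    "ext = (\<lambda>w j. if j < n then w j else 0)"
  have inj: "inj_on ext (PiE {..<n} (\<lambda>_. Wb k b))"
  proof
    fix v w assume v: "v \<in> PiE {..<n} (\<lambda>_. Wb k b)" and w: "w \<in> PiE {..<n} (\<lambda>_. Wb k b)"
      and e: "ext v = ext w"
    show "v = w"
    proof
      fix j show "v j = w j"
        using fun_cong[OF e, of j] v w by (cases "j < n") (auto simp: ext_def PiE_def extensional_def)
    qed
  qed
  have sub: "ext ` PiE {..<n} (\<lambda>_. Wb k b) \<subseteq> ?f ` ?G"
  proof
    fix y assume "y \<in> ext ` PiE {..<n} (\<lambda>_. Wb k b)"
    then obtain w where w: "w \<in> PiE {..<n} (\<lambda>_. Wb k b)" and y: "y = ext w" by auto
    have ex: "\<exists>a. w j = (\<Sum>i<k. gconv (b i) (a i))" if "j < n" for j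
      using w that unfolding Wb_def by auto
    define a where "a = (\<lambda>j. SOME a. w j = (\<Sum>i<k. gconv (b i) (a i)))"
    have a: "w j = (\<Sum>i<k. gconv (b i) (a j i))" if "j < n" for j
      unfolding a_def using someI_ex[OF ex[OF that]] .
    define A :: "nat \<Rightarrow> nat \<Rightarrow> 'g \<Rightarrow> 'f" where "A = (\<lambda>i j. if i < k \<and> j < n then a j i else 0)"
    have "A \<in> ?G" by (auto simp: A_def gmats_def)
    moreover have "?f A = y"
    proof
      fix j show "?f A j = y j"
      proof (cases "j < n")
        case True
        then have "?f A j = (\<Sum>i<k. gconv (b i) (a j i))"
          unfolding Lmap_def A_def by (auto intro: sum.cong)
        then show ?thesis using a[OF True] True by (simp add: y ext_def)
      qed (auto simp: Lmap_def y ext_def)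
    qed
    ultimately show "y \<in> ?f ` ?G" by blast
  qed
  have "card (Wb k b) ^ n = card (PiE {..<n} (\<lambda>_. Wb k b))" by (simp add: card_PiE)
  also have "\<dots> \<le> card (?f ` ?G)"
    using card_inj_on_le[OF inj sub] finite_gmats by auto
  finally have "card (Wb k b) ^ n \<le> card (?f ` ?G)" .
  then show ?thesis unfolding cG by (simp add: mult_le_mono2)
qed



lemma pow_ratio:
  assumes "c \<ge> 2" "k \<le> n"
  shows "real c ^ k * (1 / real c ^ n) \<le> (1/2) ^ (n - k)"
proof -
  have n: "n = k + (n - k)" using assms by simp
  have cp: "real c ^ k > 0" using assms by simp
  have "real c ^ k * (1 / real c ^ n) = 1 / real c ^ (n - k)"
    by (subst n, subst power_add) (use cp in \<open>simp add: field_simps\<close>)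
  also have "\<dots> \<le> 1 / 2 ^ (n - k)"
    using assms by (intro divide_left_mono power_mono) auto
  finally show ?thesis by (simp add: power_one_over)
qed

lemma bad_bound:
  assumes "k \<le> n"
  shows "0 \<le> 1 - prob_full_rank TYPE('f::{field,finite}) TYPE('g::{ab_group_add,finite}) k n \<and>
         1 - prob_full_rank TYPE('f) TYPE('g) k n \<le> 2 ^ card (UNIV :: ('g \<Rightarrow> 'f) set) * (1/2) ^ (n - k)"
proof -
  let ?G = "gmats k n :: (nat \<Rightarrow> nat \<Rightarrow> 'g \<Rightarrow> 'f) set"
  let ?FR = "{A \<in> ?G. full_rank k n A}"
  let ?BAD = "{A \<in> ?G. \<not> full_rank k n A}"
  have finG: "finite ?G" by (rule finite_gmats)
  have "0 \<in> ?G" by (simp add: gmats_def)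
  then have cG: "card ?G > 0" using finG card_gt_0_iff by blast
  have "card ?G = card (?FR \<union> ?BAD)" by (intro arg_cong[where f=card]) auto
  also have "\<dots> = card ?FR + card ?BAD" using finG by (intro card_Un_disjoint) auto
  finally have cGs: "card ?G = card ?FR + card ?BAD" .
  have eq: "1 - prob_full_rank TYPE('f) TYPE('g) k n = real (card ?BAD) / real (card ?G)"
  proof -
    have r: "real (card ?G) - real (card ?FR) = real (card ?BAD)" using cGs by simp
    have rp: "real (card ?G) \<noteq> 0" using cG by simp
    have "1 - real (card ?FR) / real (card ?G) = (real (card ?G) - real (card ?FR)) / real (card ?G)"
      using rp by (simp add: field_simps)
    then show ?thesis unfolding prob_full_rank_def r by simp
  qed
  define B' :: "(nat \<Rightarrow> 'g \<Rightarrow> 'f) set" where "B' = Bk k - {0}"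
  have finB: "finite B'"
  proof -
    have "B' \<subseteq> {b. b \<in> Bk k \<and> (\<forall>i<k. b i \<in> UNIV)}" by (auto simp: B'_def)
    then show ?thesis using card_Bk_le[of "UNIV :: ('g \<Rightarrow> 'f) set" k] finite_subset by auto
  qed
  define K where "K b = {A \<in> ?G. Lmap k n A b = 0}" for b
  have "?BAD \<subseteq> (\<Union>b\<in>B'. K b)"
    using not_full_rank_kernel unfolding K_def B'_def by fastforce
  then have "card ?BAD \<le> card (\<Union>b\<in>B'. K b)"
    using finB finG by (intro card_mono) (auto simp: K_def)
  also have "\<dots> \<le> (\<Sum>b\<in>B'. card (K b))" by (rule card_UN_le[OF finB])
  finally have "real (card ?BAD) \<le> real (\<Sum>b\<in>B'. card (K b))"
    by (simp only: of_nat_le_iff)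
  then have cB: "real (card ?BAD) \<le> (\<Sum>b\<in>B'. real (card (K b)))"
    by simp
  have Wge: "card (Wb k b) \<ge> 2" if "b \<in> B'" for b
    using Wb_props(1)[of b k] that by (auto simp: B'_def)
  have "real (card ?BAD) / real (card ?G) \<le> (\<Sum>b\<in>B'. real (card (K b))) / real (card ?G)"
    using cB cG by (intro divide_right_mono) auto
  also have "\<dots> = (\<Sum>b\<in>B'. real (card (K b)) / real (card ?G))" by (simp add: sum_divide_distrib)
  also have "\<dots> \<le> (\<Sum>b\<in>B'. 1 / real (card (Wb k b)) ^ n)"
  proof (intro sum_mono)
    fix b assume b: "b \<in> B'"
    have kb: "card (K b) * card (Wb k b) ^ n \<le> card ?G" unfolding K_def by (rule ker_bound)
    then have "real (card (K b) * card (Wb k b) ^ n) \<le> real (card ?G)"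
      by (simp only: of_nat_le_iff)
    then have "real (card (K b)) * real (card (Wb k b)) ^ n \<le> real (card ?G)"
      by simp
    moreover have "real (card (Wb k b)) ^ n > 0" using Wge[OF b] by simp
    ultimately show "real (card (K b)) / real (card ?G) \<le> 1 / real (card (Wb k b)) ^ n"
      using cG by (simp add: field_simps)
  qed
  also have "\<dots> = (\<Sum>W\<in>Wb k ` B'. \<Sum>b\<in>{b\<in>B'. Wb k b = W}. 1 / real (card (Wb k b)) ^ n)"
    using finB by (intro sum.group[symmetric]) auto
  also have "\<dots> = (\<Sum>W\<in>Wb k ` B'. real (card {b\<in>B'. Wb k b = W}) * (1 / real (card W) ^ n))"
    by (intro sum.cong) auto
  also have "\<dots> \<le> (\<Sum>W\<in>Wb k ` B'. real (card W) ^ k * (1 / real (card W) ^ n))"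
  proof (intro sum_mono mult_right_mono)
    fix W assume W: "W \<in> Wb k ` B'"
    have "{b\<in>B'. Wb k b = W} \<subseteq> {b. b \<in> Bk k \<and> (\<forall>i<k. b i \<in> W)}"
      using Wb_props(2) by (auto simp: B'_def)
    then have "card {b\<in>B'. Wb k b = W} \<le> card {b. b \<in> Bk k \<and> (\<forall>i<k. b i \<in> W)}"
      using card_Bk_le[of W k] by (intro card_mono) auto
    also have "\<dots> \<le> card W ^ k" using card_Bk_le[of W k] by simp
    finally have "real (card {b\<in>B'. Wb k b = W}) \<le> real (card W ^ k)"
      by (simp only: of_nat_le_iff)
    then show "real (card {b\<in>B'. Wb k b = W}) \<le> real (card W) ^ k"
      by simp
  qed auto
  also have "\<dots> \<le> (\<Sum>W\<in>Wb k ` B'. (1/2) ^ (n - k))"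
    using Wge assms by (intro sum_mono pow_ratio) auto
  also have "\<dots> = real (card (Wb k ` B')) * (1/2) ^ (n - k)" by simp
  also have "\<dots> \<le> 2 ^ card (UNIV :: ('g \<Rightarrow> 'f) set) * (1/2) ^ (n - k)"
  proof (intro mult_right_mono)
    have "card (Wb k ` B') \<le> card (Pow (UNIV :: ('g \<Rightarrow> 'f) set))"
      by (intro card_mono) auto
    then have "real (card (Wb k ` B')) \<le> real (2 ^ card (UNIV :: ('g \<Rightarrow> 'f) set))"
      using card_Pow[of "UNIV :: ('g \<Rightarrow> 'f) set"] by (simp only: of_nat_le_iff finite_UNIV)
    then show "real (card (Wb k ` B')) \<le> 2 ^ card (UNIV :: ('g \<Rightarrow> 'f) set)"
      by simp
  qed auto
  finally show ?thesis unfolding eq by simp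
qed



theorem lemma6p3:
  fixes r :: real
  assumes "0 < r" and "r < 1"
  defines "P \<equiv> (\<lambda>n. prob_full_rank TYPE('f::{field,finite}) TYPE('g::{ab_group_add,finite})
                     (nat (round (r * real n))) n)"
  shows "(P \<longlongrightarrow> 1) sequentially \<and> ((\<lambda>n. 1 - P n) \<longlongrightarrow> 0) sequentially \<and>
         (\<exists>C c. 0 < c \<and> (\<forall>n. \<bar>1 - P n\<bar> \<le> C * exp (- c * real n)))"
proof -
  define M :: real where "M = 2 ^ card (UNIV :: ('g \<Rightarrow> 'f) set)"
  define c where "c = ln 2 * (1 - r)"
  define C where "C = M * exp (ln 2 / 2)"
  have cpos: "0 < c" using assms by (simp add: c_def)
  have bnd: "0 \<le> 1 - P n \<and> 1 - P n \<le> C * exp (- c * real n)" for n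
  proof -
    define k where "k = nat (round (r * real n))"
    have r0: "0 \<le> r * real n" using assms by simp
    have ge: "r * real n - 1/2 \<le> of_int (round (r * real n))" by (rule of_int_round_ge)
    have le: "of_int (round (r * real n)) \<le> r * real n + 1/2" by (rule of_int_round_le)
    have rnn: "round (r * real n) \<ge> 0" using ge r0 by linarith
    have kr: "real k = of_int (round (r * real n))" unfolding k_def using rnn by simp
    have "r * real n \<le> real n" using assms by (intro mult_left_le_one_le) auto
    then have "real k < real n + 1" using kr le by linarith
    then have kn: "k \<le> n" by linarith
    have nk: "real (n - k) \<ge> (1 - r) * real n - 1/2" using kn kr le by (simp add: of_nat_diff algebra_simps)
    have B: "0 \<le> 1 - P n \<and> 1 - P n \<le> M * (1/2) ^ (n - k)"
      using bad_bound[OF kn] unfolding P_def k_def M_def by simp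
    have "(1/2::real) ^ (n - k) = exp (- ln 2 * real (n - k))"
    proof -
      have "exp (- ln 2 * real (n - k)) = exp (real (n - k) * (- ln 2))" by (simp add: mult.commute)
      also have "\<dots> = exp (- ln 2) ^ (n - k)" by (rule exp_of_nat_mult)
      also have "exp (- ln (2::real)) = 1/2" by (simp add: exp_minus)
      finally show ?thesis by simp
    qed
    also have "\<dots> \<le> exp (- ln 2 * ((1 - r) * real n - 1/2))"
      using nk by (intro exp_le_cancel_iff[THEN iffD2]) (simp add: mult_le_cancel_left)
    also have "\<dots> = exp (ln 2 / 2) * exp (- c * real n)"
      by (simp add: c_def exp_add[symmetric] algebra_simps)
    finally have "M * (1/2) ^ (n - k) \<le> M * (exp (ln 2 / 2) * exp (- c * real n))"
      by (intro mult_left_mono) (auto simp: M_def)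
    then show ?thesis using B by (simp add: C_def mult.assoc)
  qed
  have lim0: "((\<lambda>n. C * exp (- c * real n)) \<longlongrightarrow> 0) sequentially"
  proof -
    have e: "exp (- c * real n) = exp (- c) ^ n" for n
      using exp_of_nat_mult[of n "-c"] by (simp add: mult.commute)
    have "((\<lambda>n. exp (- c) ^ n) \<longlongrightarrow> 0) sequentially"
      using cpos by (intro LIMSEQ_power_zero) simp
    then show ?thesis unfolding e by (rule tendsto_mult_right_zero)
  qed
  have t1: "((\<lambda>n. 1 - P n) \<longlongrightarrow> 0) sequentially"
    by (rule tendsto_sandwich[OF _ _ tendsto_const lim0]) (use bnd in auto)
  have t2: "(P \<longlongrightarrow> 1) sequentially"
  proof -
    have "((\<lambda>n. 1 - (1 - P n)) \<longlongrightarrow> 1 - 0) sequentially"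
      by (intro tendsto_diff tendsto_const t1)
    then show ?thesis by simp
  qed
  have "\<forall>n. \<bar>1 - P n\<bar> \<le> C * exp (- c * real n)" using bnd by auto
  then show ?thesis using t1 t2 cpos by blast
qed

end
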